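(* Let $(\mathfrak g,B,S,E)$ be a quadratic ENL-RB algebra of weight $\lambda\neq0$. Then $(\mathfrak g,\mathfrak g^*_{r^{B,S}},E)$ is an ENL bialgebra; that is, $(\mathfrak g,\mathfrak g^*_{r^{B,S}})$ is a Lie bialgebra, $E$ is an equivariant Nijenhuis operator on $\mathfrak g$ and $E^*$ is an equivariant Nijenhuis operator on the Lie algebra $\mathfrak g^*_{r^{B,S}}$, i.e. $E^*[\xi,\eta]_{r^{B,S}}=[E^*\xi,\eta]_{r^{B,S}}$ for all $\xi,\eta\in\mathfrak g^*$.
   Context: All vector spaces are finite-dimensional over an algebraically closed field of characteristic zero. A Rota–Baxter operator of weight $\lambda$ on a Lie algebra $\mathfrak g$ is linear $B$ with $[Bx,By]=B([Bx,y]+[x,By]+\lambda[x,y])$. A quadratic Rota–Baxter Lie algebra $(\mathfrak g,B,S)$ of weight $\lambda$ is such a $B$ together with a nondegenerate symmetric invariant ($S([x,y],z)+S(y,[x,z])=0$) bilinear form $S$ with $S(x,By)+S(Bx,y)+\lambda S(x,y)=0$. A quadratic ENL-RB algebra $(\mathfrak g,B,S,E)$ is a quadratic Rota–Baxter Lie algebra $(\mathfrak g,B,S)$ of weight $\lambda\neq0$ with a linear $E:\mathfrak g\to\mathfrak g$ such that $E[x,y]=[x,Ey]$ for all $x,y$, $S(Ex,y)=S(x,Ey)$, and $E\circ B=B\circ E$. Let $\mathcal I_S:\mathfrak g^*\to\mathfrak g$ be defined by $\langle\mathcal I_S^{-1}x,y\rangle=S(x,y)$, and let $r^{B,S}\in\mathfrak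 g\otimes\mathfrak g$ be the tensor with $r_+:=r^{B,S}(\xi,\cdot)=\frac1\lambda(B+\lambda\mathrm{Id})\circ\mathcal I_S(\xi)$; set $r_-:=-r_+^*$. The Lie algebra $\mathfrak g^*_{r^{B,S}}$ is $\mathfrak g^*$ with bracket $[\xi,\eta]_{r^{B,S}}=\mathrm{ad}^*_{r_+\xi}\eta-\mathrm{ad}^*_{r_-\eta}\xi$, where $\langle\mathrm{ad}^*_x\xi,y\rangle=-\langle\xi,[x,y]\rangle$. A Lie bialgebra $(\mathfrak g,\mathfrak g^* )$ means Lie brackets on $\mathfrak g$ and $\mathfrak g^*$ such that the map $\Delta:\mathfrak g\to\mathfrak g\otimes\mathfrak g$ dual to the bracket on $\mathfrak g^*$ is a 1-cocycle: $\Delta([x,y])=(\mathrm{ad}_x\otimes\mathrm{Id}+\mathrm{Id}\otimes\mathrm{ad}_x)\Delta(y)-(\mathrm{ad}_y\otimes\mathrm{Id}+\mathrm{Id}\otimes\mathrm{ad}_y)\Delta(x)$. An ENL bialgebra $(\mathfrak g,\mathfrak g^*,E)$ is a Lie bialgebra such that $E[x,y]=[x,Ey]$ on $\mathfrak g$ and $E^*[\xi,\eta]=[\xi,E^*\eta]$ on $\mathfrak g^*$. *)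

theory Defs
  imports Main "HOL-Computational_Algebra.Polynomial"
begin

definition alg_closed_field :: "'k::field_char_0 itself \<Rightarrow> bool" where
  "alg_closed_field _ \<longleftrightarrow> (\<forall>p :: 'k poly. degree p > 0 \<longrightarrow> (\<exists>x. poly p x = 0))"

definition fd_space :: "('k::field \<Rightarrow> 'v::ab_group_add \<Rightarrow> 'v) \<Rightarrow> bool" where
  "fd_space sc \<longleftrightarrow> (\<exists>Bs. finite_dimensional_vector_space sc Bs)"

definition dual_sp :: "('k::field \<Rightarrow> 'v::ab_group_add \<Rightarrow> 'v) \<Rightarrow> ('v \<Rightarrow> 'k) set" where
  "dual_sp sc = {\<xi>. Vector_Spaces.linear sc (*) \<xi>}"

definition lie_algebra :: "('k::field \<Rightarrow> 'v::ab_group_add \<Rightarrow> 'v) \<Rightarrow> ('v \<Rightarrow> 'v \<Rightarrow> 'v) \<Rightarrow> bool" where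
  "lie_algebra sc br \<longleftrightarrow> vector_space sc
     \<and> (\<forall>x. Vector_Spaces.linear sc sc (br x))
     \<and> (\<forall>y. Vector_Spaces.linear sc sc (\<lambda>x. br x y))
     \<and> (\<forall>x y. br x y = - br y x)
     \<and> (\<forall>x y z. br x (br y z) + br y (br z x) + br z (br x y) = 0)"

definition dual_lie_algebra :: "('k::field \<Rightarrow> 'v::ab_group_add \<Rightarrow> 'v) \<Rightarrow>
     (('v \<Rightarrow> 'k) \<Rightarrow> ('v \<Rightarrow> 'k) \<Rightarrow> ('v \<Rightarrow> 'k)) \<Rightarrow> bool" where
  "dual_lie_algebra sc dbr \<longleftrightarrow>
     (\<forall>\<xi>\<in>dual_sp sc. \<forall>\<eta>\<in>dual_sp sc. dbr \<xi> \<eta> \<in> dual_sp sc)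
   \<and> (\<forall>a b \<xi> \<xi>' \<eta>. \<xi> \<in> dual_sp sc \<longrightarrow> \<xi>' \<in> dual_sp sc \<longrightarrow> \<eta> \<in> dual_sp sc \<longrightarrow>
        dbr (\<lambda>v. a * \<xi> v + b * \<xi>' v) \<eta> = (\<lambda>v. a * dbr \<xi> \<eta> v + b * dbr \<xi>' \<eta> v))
   \<and> (\<forall>a b \<xi> \<eta> \<eta>'. \<xi> \<in> dual_sp sc \<longrightarrow> \<eta> \<in> dual_sp sc \<longrightarrow> \<eta>' \<in> dual_sp sc \<longrightarrow>
        dbr \<xi> (\<lambda>v. a * \<eta> v + b * \<eta>' v) = (\<lambda>v. a * dbr \<xi> \<eta> v + b * dbr \<xi> \<eta>' v))
   \<and> (\<forall>\<xi>\<in>dual_sp sc. \<forall>\<eta>\<in>dual_sp sc. dbr \<xi> \<eta> = (\<lambda>v. - dbr \<eta> \<xi> v))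
   \<and> (\<forall>\<xi>\<in>dual_sp sc. \<forall>\<eta>\<in>dual_sp sc. \<forall>\<zeta>\<in>dual_sp sc.
        (\<lambda>v. dbr \<xi> (dbr \<eta> \<zeta>) v + dbr \<eta> (dbr \<zeta> \<xi>) v + dbr \<zeta> (dbr \<xi> \<eta>) v) = (\<lambda>v. 0))"

text \<open>The cobracket Delta : g -> g (x) g is dual to dbr, i.e.
  <Delta x, xi (x) eta> = <dbr xi eta, x>.  Since g (x) g is identified with bilinear forms
  on g^* (finite dimension), the 1-cocycle condition is stated by pairing both sides with
  xi (x) eta; note <(ad_x (x) Id) t, xi (x) eta> = <t, (xi o ad_x) (x) eta>.\<close>
definition lie_bialgebra :: "('k::field \<Rightarrow> 'v::ab_group_add \<Rightarrow> 'v) \<Rightarrow> ('v \<Rightarrow> 'v \<Rightarrow> 'v) \<Rightarrow>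
     (('v \<Rightarrow> 'k) \<Rightarrow> ('v \<Rightarrow> 'k) \<Rightarrow> ('v \<Rightarrow> 'k)) \<Rightarrow> bool" where
  "lie_bialgebra sc br dbr \<longleftrightarrow> lie_algebra sc br \<and> dual_lie_algebra sc dbr
   \<and> (\<forall>x y. \<forall>\<xi>\<in>dual_sp sc. \<forall>\<eta>\<in>dual_sp sc.
        dbr \<xi> \<eta> (br x y) =
          dbr (\<lambda>z. \<xi> (br x z)) \<eta> y + dbr \<xi> (\<lambda>z. \<eta> (br x z)) y
        - dbr (\<lambda>z. \<xi> (br y z)) \<eta> x - dbr \<xi> (\<lambda>z. \<eta> (br y z)) x)"

text \<open>ENL bialgebra; the dual map E^* acts by E^* xi = xi o E.\<close>
definition enl_bialgebra :: "('k::field \<Rightarrow> 'v::ab_group_add \<Rightarrow> 'v) \<Rightarrow> ('v \<Rightarrow> 'v \<Rightarrow> 'v) \<Rightarrow>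
     (('v \<Rightarrow> 'k) \<Rightarrow> ('v \<Rightarrow> 'k) \<Rightarrow> ('v \<Rightarrow> 'k)) \<Rightarrow> ('v \<Rightarrow> 'v) \<Rightarrow> bool" where
  "enl_bialgebra sc br dbr E \<longleftrightarrow> lie_bialgebra sc br dbr
   \<and> Vector_Spaces.linear sc sc E
   \<and> (\<forall>x y. E (br x y) = br x (E y))
   \<and> (\<forall>\<xi>\<in>dual_sp sc. \<forall>\<eta>\<in>dual_sp sc. dbr \<xi> \<eta> \<circ> E = dbr \<xi> (\<eta> \<circ> E))"

definition quadratic_RB_lie :: "('k::field \<Rightarrow> 'v::ab_group_add \<Rightarrow> 'v) \<Rightarrow> ('v \<Rightarrow> 'v \<Rightarrow> 'v) \<Rightarrow>
     ('v \<Rightarrow> 'v) \<Rightarrow> ('v \<Rightarrow> 'v \<Rightarrow> 'k) \<Rightarrow> 'k \<Rightarrow> bool" where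
  "quadratic_RB_lie sc br B S lam \<longleftrightarrow> lie_algebra sc br
   \<and> Vector_Spaces.linear sc sc B
   \<and> (\<forall>x y. br (B x) (B y) = B (br (B x) y + br x (B y) + sc lam (br x y)))
   \<and> (\<forall>x. Vector_Spaces.linear sc (*) (S x))
   \<and> (\<forall>y. Vector_Spaces.linear sc (*) (\<lambda>x. S x y))
   \<and> (\<forall>x y. S x y = S y x)
   \<and> (\<forall>x. (\<forall>y. S x y = 0) \<longrightarrow> x = 0)
   \<and> (\<forall>x y z. S (br x y) z + S y (br x z) = 0)
   \<and> (\<forall>x y. S x (B y) + S (B x) y + lam * S x y = 0)"

definition quadratic_ENL_RB :: "('k::field \<Rightarrow> 'v::ab_group_add \<Rightarrow> 'v) \<Rightarrow> ('v \<Rightarrow> 'v \<Rightarrow> 'v) \<Rightarrow>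
     ('v \<Rightarrow> 'v) \<Rightarrow> ('v \<Rightarrow> 'v \<Rightarrow> 'k) \<Rightarrow> ('v \<Rightarrow> 'v) \<Rightarrow> 'k \<Rightarrow> bool" where
  "quadratic_ENL_RB sc br B S E lam \<longleftrightarrow> quadratic_RB_lie sc br B S lam \<and> lam \<noteq> 0
   \<and> Vector_Spaces.linear sc sc E
   \<and> (\<forall>x y. E (br x y) = br x (E y))
   \<and> (\<forall>x y. S (E x) y = S x (E y))
   \<and> E \<circ> B = B \<circ> E"

definition I_S :: "('v \<Rightarrow> 'v \<Rightarrow> 'k) \<Rightarrow> ('v \<Rightarrow> 'k) \<Rightarrow> 'v" where
  "I_S S \<xi> = (THE x. \<forall>y. S x y = \<xi> y)"

definition r_plus :: "('k::field \<Rightarrow> 'v::ab_group_add \<Rightarrow> 'v) \<Rightarrow> ('v \<Rightarrow> 'v) \<Rightarrow>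
     ('v \<Rightarrow> 'v \<Rightarrow> 'k) \<Rightarrow> 'k \<Rightarrow> ('v \<Rightarrow> 'k) \<Rightarrow> 'v" where
  "r_plus sc B S lam \<xi> = sc (1 / lam) (B (I_S S \<xi>) + sc lam (I_S S \<xi>))"

text \<open>r_- = - r_+^*, with g^** identified with g: <zeta, r_- eta> = - <eta, r_+ zeta>.\<close>
definition r_minus :: "('k::field \<Rightarrow> 'v::ab_group_add \<Rightarrow> 'v) \<Rightarrow> ('v \<Rightarrow> 'v) \<Rightarrow>
     ('v \<Rightarrow> 'v \<Rightarrow> 'k) \<Rightarrow> 'k \<Rightarrow> ('v \<Rightarrow> 'k) \<Rightarrow> 'v" where
  "r_minus sc B S lam \<eta> = (THE x. \<forall>\<zeta>\<in>dual_sp sc. \<zeta> x = - \<eta> (r_plus sc B S lam \<zeta>))"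

definition ad_star :: "('v \<Rightarrow> 'v \<Rightarrow> 'v) \<Rightarrow> 'v \<Rightarrow> ('v \<Rightarrow> 'k::ab_group_add) \<Rightarrow> ('v \<Rightarrow> 'k)" where
  "ad_star br x \<xi> = (\<lambda>y. - \<xi> (br x y))"

definition r_bracket :: "('k::field \<Rightarrow> 'v::ab_group_add \<Rightarrow> 'v) \<Rightarrow> ('v \<Rightarrow> 'v \<Rightarrow> 'v) \<Rightarrow> ('v \<Rightarrow> 'v) \<Rightarrow>
     ('v \<Rightarrow> 'v \<Rightarrow> 'k) \<Rightarrow> 'k \<Rightarrow> ('v \<Rightarrow> 'k) \<Rightarrow> ('v \<Rightarrow> 'k) \<Rightarrow> ('v \<Rightarrow> 'k)" where
  "r_bracket sc br B S lam \<xi> \<eta> =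
     (\<lambda>y. ad_star br (r_plus sc B S lam \<xi>) \<eta> y - ad_star br (r_minus sc B S lam \<eta>) \<xi> y)"

end

theory Submission
  imports Defs
begin

lemma addfun:
  fixes f :: "'a::ab_group_add \<Rightarrow> 'b::ab_group_add"
  assumes "\<And>x y. f (x+y) = f x + f y"
  shows "f 0 = 0" "f (-x) = - f x" "f (x - y) = f x - f y"
proof -
  have "f 0 = f 0 + f 0" using assms[of 0 0] by simp
  then show z: "f 0 = 0" by simp
  have m: "f (-u) = - f u" for u
  proof -
    have "f u + f (-u) = 0" using assms[of u "-u"] z by simp
    then show ?thesis by (simp add: add_eq_0_iff)
  qed
  then show "f (-x) = - f x" .
  show "f (x - y) = f x - f y" using assms[of x "-y"] m[of y] by simp
qed

locale QE =
  fixes sc :: "'k::field \<Rightarrow> 'v::ab_group_add \<Rightarrow> 'v"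
    and br :: "'v \<Rightarrow> 'v \<Rightarrow> 'v"
    and B E :: "'v \<Rightarrow> 'v"
    and S :: "'v \<Rightarrow> 'v \<Rightarrow> 'k"
    and lam :: 'k
    and Bs :: "'v set"
  assumes fdv: "finite_dimensional_vector_space sc Bs"
    and QQ: "quadratic_ENL_RB sc br B S E lam"
begin

sublocale V: finite_dimensional_vector_space sc Bs by (rule fdv)

lemma lie: "lie_algebra sc br" using QQ by (simp add: quadratic_ENL_RB_def quadratic_RB_lie_def)

lemma lamnz: "lam \<noteq> 0" using QQ by (simp add: quadratic_ENL_RB_def)

lemma br_add2: "br x (y + z) = br x y + br x z"
  and br_sc2: "br x (sc c y) = sc c (br x y)"
  and br_add1: "br (y + z) x = br y x + br z x"
  and br_sc1: "br (sc c y) x = sc c (br y x)"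
  and br_anti: "br x y = - br y x"
  and jac: "br x (br y z) + br y (br z x) + br z (br x y) = 0"
  using lie[unfolded lie_algebra_def Vector_Spaces.linear_iff] by blast+

lemma br_0_2 [simp]: "br x 0 = 0" and br_neg2: "br x (- y) = - br x y" and br_diff2: "br x (y - z) = br x y - br x z"
  using addfun[of "br x", OF br_add2] by auto
lemma br_0_1 [simp]: "br 0 x = 0" and br_neg1: "br (- y) x = - br y x" and br_diff1: "br (y - z) x = br y x - br z x"
  using addfun[of "\<lambda>y. br y x", OF br_add1] by auto

lemma linB: "Vector_Spaces.linear sc sc B"
  and RBid: "br (B x) (B y) = B (br (B x) y + br x (B y) + sc lam (br x y))"
  and linS2: "Vector_Spaces.linear sc (*) (S x)"
  and linS1: "Vector_Spaces.linear sc (*) (\<lambda>x. S x y)"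
  and S_sym: "S x y = S y x"
  and S_nd: "(\<forall>y. S x y = 0) \<Longrightarrow> x = 0"
  and S_inv: "S (br x y) z + S y (br x z) = 0"
  and S_B: "S x (B y) + S (B x) y + lam * S x y = 0"
  using QQ[unfolded quadratic_ENL_RB_def quadratic_RB_lie_def] by blast+

lemma linE: "Vector_Spaces.linear sc sc E"
  and E_br: "E (br x y) = br x (E y)"
  and S_E: "S (E x) y = S x (E y)"
  and EB: "E (B x) = B (E x)"
  using QQ unfolding quadratic_ENL_RB_def by (auto simp: fun_eq_iff)

lemma B_add: "B (x + y) = B x + B y" and B_sc: "B (sc c x) = sc c (B x)"
  using linB[unfolded Vector_Spaces.linear_iff] by blast+
lemma E_add: "E (x + y) = E x + E y" and E_sc: "E (sc c x) = sc c (E x)"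
  using linE[unfolded Vector_Spaces.linear_iff] by blast+
lemma S_add2: "S x (y + z) = S x y + S x z" and S_sc2: "S x (sc c y) = c * S x y"
  using linS2[of x, unfolded Vector_Spaces.linear_iff] by auto
lemma S_add1: "S (y + z) x = S y x + S z x" and S_sc1: "S (sc c y) x = c * S y x"
  using linS1[of x, unfolded Vector_Spaces.linear_iff] by auto

lemma B_0 [simp]: "B 0 = 0" and B_neg: "B (- y) = - B y" and B_diff: "B (y - z) = B y - B z"
  using addfun[of B, OF B_add] by auto
lemma E_0 [simp]: "E 0 = 0" and E_neg: "E (- y) = - E y" and E_diff: "E (y - z) = E y - E z"
  using addfun[of E, OF E_add] by auto
lemma S_neg2: "S x (- y) = - S x y" and S_diff2: "S x (y - z) = S x y - S x z"
  using addfun[of "S x", OF S_add2] by auto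
lemma S_neg1: "S (- y) x = - S y x" and S_diff1: "S (y - z) x = S y x - S z x"
  using addfun[of "\<lambda>y. S y x", OF S_add1] by auto

lemma S_dual: "S a \<in> dual_sp sc"
  using linS2 by (simp add: dual_sp_def)

lemma coeff_zero:
  assumes "(\<Sum>e\<in>Bs. sc (u e) e) = 0" "e \<in> Bs"
  shows "u e = 0"
  using V.dependent_finite[OF V.finite_Basis] V.independent_Basis assms by blast

lemma func_zero_on_basis:
  assumes "Vector_Spaces.linear sc (*) f" "\<And>e. e \<in> Bs \<Longrightarrow> f e = 0"
  shows "f x = 0"
proof -
  have mh: "module_hom sc (*) f" using assms(1) by (simp add: module_hom_iff_linear)
  show ?thesis using module_hom.eq_0_on_span[OF mh, of Bs x] assms(2) V.span_Basis by auto
qed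

definition T :: "'v \<Rightarrow> 'v" where "T a = (\<Sum>e\<in>Bs. sc (S a e) e)"

lemma T_lin: "Vector_Spaces.linear sc sc T"
proof -
  have "T (x + y) = T x + T y" for x y
    by (simp add: T_def S_add1 V.scale_left_distrib sum.distrib)
  moreover have "T (sc c x) = sc c (T x)" for c x
    by (simp add: T_def S_sc1 V.scale_sum_right)
  ultimately show ?thesis unfolding Vector_Spaces.linear_iff using V.vector_space_axioms by blast
qed

lemma T_inj: "inj T"
proof (rule injI)
  fix a a' assume "T a = T a'"
  then have "(\<Sum>e\<in>Bs. sc (S a e - S a' e) e) = 0"
    by (simp add: T_def V.scale_left_diff_distrib sum_subtractf)
  then have "\<And>e. e \<in> Bs \<Longrightarrow> S (a - a') e = 0" using coeff_zero[of "\<lambda>e. S a e - S a' e"] by (simp add: S_diff1)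
  then have "\<And>y. S (a - a') y = 0" using func_zero_on_basis[OF linS2] by blast
  then show "a = a'" using S_nd[of "a - a'"] by auto
qed

lemma riesz_ex:
  assumes "\<xi> \<in> dual_sp sc"
  shows "\<exists>a. \<forall>y. S a y = \<xi> y"
proof -
  have "surj T" using V.linear_inj_imp_surj[OF T_lin T_inj] .
  then obtain a where a: "T a = (\<Sum>e\<in>Bs. sc (\<xi> e) e)" by (metis surj_def)
  then have "(\<Sum>e\<in>Bs. sc (S a e - \<xi> e) e) = 0"
    by (simp add: T_def V.scale_left_diff_distrib sum_subtractf)
  then have z: "\<And>e. e \<in> Bs \<Longrightarrow> S a e - \<xi> e = 0" using coeff_zero[of "\<lambda>e. S a e - \<xi> e"] by blast
  have lin: "Vector_Spaces.linear sc (*) (\<lambda>y. S a y - \<xi> y)"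
    using linS2[of a] assms unfolding dual_sp_def Vector_Spaces.linear_iff by (auto simp: algebra_simps)
  have "\<And>y. S a y - \<xi> y = 0" using func_zero_on_basis[OF lin] z by blast
  then show ?thesis by auto
qed

lemma riesz_uniq: "(\<forall>y. S a y = f y) \<Longrightarrow> (\<forall>y. S a' y = f y) \<Longrightarrow> a = a'"
  using S_nd[of "a - a'"] by (simp add: S_diff1)

lemma IS_prop:
  assumes "\<xi> \<in> dual_sp sc" shows "S (I_S S \<xi>) y = \<xi> y"
proof -
  obtain a where a: "\<forall>y. S a y = \<xi> y" using riesz_ex[OF assms] by blast
  have "I_S S \<xi> = a" unfolding I_S_def
    by (rule the_equality) (use a riesz_uniq in blast)+
  then show ?thesis using a by simp
qed

lemma IS_S [simp]: "I_S S (S a) = a"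
  unfolding I_S_def by (rule the_equality) (auto intro: riesz_uniq)

lemma dual_eq: "\<xi> \<in> dual_sp sc \<Longrightarrow> \<xi> = S (I_S S \<xi>)"
  using IS_prop by auto

lemma dual_cases: "\<xi> \<in> dual_sp sc \<Longrightarrow> (\<And>a. \<xi> = S a \<Longrightarrow> P) \<Longrightarrow> P"
  using dual_eq by blast


definition P where "P a = sc (1/lam) (B a + sc lam a)"
definition Qm where "Qm b = sc (1/lam) (B b)"
definition M where "M a b = br (P a) b - br (Qm b) a"

lemma P_add: "P (x + y) = P x + P y"
  by (simp add: P_def B_add V.scale_right_distrib ac_simps)
lemma P_sc: "P (sc c x) = sc c (P x)"
  by (simp add: P_def B_sc V.scale_right_distrib mult.commute)
lemma P_neg: "P (- y) = - P y" and P_diff: "P (y - z) = P y - P z"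
  using addfun[of P, OF P_add] by auto
lemma Q_add: "Qm (x + y) = Qm x + Qm y"
  by (simp add: Qm_def B_add V.scale_right_distrib)
lemma Q_sc: "Qm (sc c x) = sc c (Qm x)"
  by (simp add: Qm_def B_sc mult.commute)

lemma P_minus_Q: "P a - Qm a = a"
  by (simp add: P_def Qm_def V.scale_right_distrib lamnz)

lemma SI: "S b (br x y) = - S (br x b) y"
  using S_inv[of x b y] by (simp add: add_eq_0_iff)

lemma S_PQ: "S (P u) v = - S u (Qm v)"
proof -
  have h: "S (B u) v + lam * S u v = - S u (B v)"
    using S_B[of u v] by (simp add: eq_neg_iff_add_eq_0 ac_simps)
  show ?thesis
    by (simp add: P_def Qm_def S_sc1 S_sc2 S_add1 h)
qed

lemma rplus_S: "r_plus sc B S lam (S a) = P a"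
  by (simp add: r_plus_def P_def)

lemma rminus_S: "r_minus sc B S lam (S b) = Qm b"
  unfolding r_minus_def
proof (rule the_equality)
  show "\<forall>\<zeta>\<in>dual_sp sc. \<zeta> (Qm b) = - S b (r_plus sc B S lam \<zeta>)"
  proof
    fix \<zeta> assume "\<zeta> \<in> dual_sp sc"
    then obtain c where c: "\<zeta> = S c" by (rule dual_cases)
    show "\<zeta> (Qm b) = - S b (r_plus sc B S lam \<zeta>)"
      using S_PQ[of c b] by (simp add: c rplus_S S_sym[of b])
  qed
next
  fix x assume x: "\<forall>\<zeta>\<in>dual_sp sc. \<zeta> x = - S b (r_plus sc B S lam \<zeta>)"
  have "S (x - Qm b) y = 0" for y
  proof -
    have "S y x = - S b (P y)" using bspec[OF x S_dual[of y]] by (simp add: rplus_S)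
    also have "\<dots> = S y (Qm b)" using S_PQ[of y b] by (simp add: S_sym[of b])
    finally show ?thesis by (simp add: S_diff2 S_sym[of _ y])
  qed
  then show "x = Qm b" using S_nd[of "x - Qm b"] by auto
qed

lemma rbr_S: "r_bracket sc br B S lam (S a) (S b) = S (M a b)"
proof
  fix y
  show "r_bracket sc br B S lam (S a) (S b) y = S (M a b) y"
    by (simp add: r_bracket_def ad_star_def rplus_S rminus_S M_def S_diff1 SI)
qed

lemma M_add1: "M (a + a') b = M a b + M a' b"
  by (simp add: M_def P_add br_add1 br_add2 algebra_simps)
lemma M_sc1: "M (sc c a) b = sc c (M a b)"
  by (simp add: M_def P_sc br_sc1 br_sc2 V.scale_right_diff_distrib)
lemma M_add2: "M a (b + b') = M a b + M a b'"
  by (simp add: M_def Q_add br_add1 br_add2 algebra_simps)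
lemma M_sc2: "M a (sc c b) = sc c (M a b)"
  by (simp add: M_def Q_sc br_sc1 br_sc2 V.scale_right_diff_distrib)

lemma M_anti: "M a b = - M b a"
proof -
  have 1: "br (P a) b - br (Qm a) b = br a b" by (simp flip: br_diff1 add: P_minus_Q)
  have 2: "br (P b) a - br (Qm b) a = br b a" by (simp flip: br_diff1 add: P_minus_Q)
  have "M a b + M b a = br a b + br b a"
    unfolding M_def by (simp flip: 1 2 add: algebra_simps)
  also have "\<dots> = 0" using br_anti[of a b] by simp
  finally show ?thesis by (simp add: eq_neg_iff_add_eq_0)
qed


definition phi where "phi a b = br (B a) b + br a (B b) + sc lam (br a b)"

lemma M_phi: "M a b = sc (1/lam) (phi a b)"
proof -
  have "br (Qm b) a = - br a (Qm b)" by (rule br_anti)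
  then show ?thesis
    by (simp add: M_def phi_def P_def Qm_def br_sc1 br_sc2 br_add1 V.scale_right_distrib lamnz
        br_anti[of "B b" a])
qed

lemma phi_add2: "phi a (y + z) = phi a y + phi a z"
  by (simp add: phi_def br_add2 B_add V.scale_right_distrib ac_simps)
lemma phi_sc2: "phi a (sc c y) = sc c (phi a y)"
  by (simp add: phi_def br_sc2 B_sc V.scale_right_distrib mult.commute)

lemma B_phi: "B (phi x y) = br (B x) (B y)"
  by (simp add: phi_def RBid)

lemma phi_expand: "phi a (phi b c) =
   (br (B a) (br (B b) c) + br (B a) (br b (B c)) + br a (br (B b) (B c)))
 + sc lam (br (B a) (br b c) + br a (br (B b) c) + br a (br b (B c)))
 + sc (lam * lam) (br a (br b c))"
proof -
  have "phi a (phi b c) = br (B a) (phi b c) + br a (br (B b) (B c)) + sc lam (br a (phi b c))"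
    by (simp add: phi_def[of a "phi b c"] B_phi)
  then show ?thesis
    by (simp add: phi_def br_add2 br_sc2 V.scale_right_distrib ac_simps)
qed

lemma phi_jac: "phi a (phi b c) + phi b (phi c a) + phi c (phi a b) = 0"
proof -
  have J0: "(br (B a) (br (B b) c) + br (B a) (br b (B c)) + br a (br (B b) (B c)))
     + (br (B b) (br (B c) a) + br (B b) (br c (B a)) + br b (br (B c) (B a)))
     + (br (B c) (br (B a) b) + br (B c) (br a (B b)) + br c (br (B a) (B b)))
     = (br (B a) (br (B b) c) + br (B b) (br c (B a)) + br c (br (B a) (B b)))
     + (br (B b) (br (B c) a) + br (B c) (br a (B b)) + br a (br (B b) (B c)))
     + (br (B c) (br (B a) b) + br (B a) (br b (B c)) + br b (br (B c) (B a)))"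
    by (simp add: ac_simps)
  also have "\<dots> = 0" using jac[of "B a" "B b" c] jac[of "B b" "B c" a] jac[of "B c" "B a" b] by simp
  finally have J0': "(br (B a) (br (B b) c) + br (B a) (br b (B c)) + br a (br (B b) (B c)))
     + (br (B b) (br (B c) a) + br (B b) (br c (B a)) + br b (br (B c) (B a)))
     + (br (B c) (br (B a) b) + br (B c) (br a (B b)) + br c (br (B a) (B b))) = 0" .
  have J1: "(br (B a) (br b c) + br a (br (B b) c) + br a (br b (B c)))
     + (br (B b) (br c a) + br b (br (B c) a) + br b (br c (B a)))
     + (br (B c) (br a b) + br c (br (B a) b) + br c (br a (B b)))
     = (br (B a) (br b c) + br b (br c (B a)) + br c (br (B a) b))
     + (br (B b) (br c a) + br c (br a (B b)) + br a (br (B b) c))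
     + (br (B c) (br a b) + br a (br b (B c)) + br b (br (B c) a))"
    by (simp add: ac_simps)
  also have "\<dots> = 0" using jac[of "B a" b c] jac[of "B b" c a] jac[of "B c" a b] by simp
  finally have J1': "(br (B a) (br b c) + br a (br (B b) c) + br a (br b (B c)))
     + (br (B b) (br c a) + br b (br (B c) a) + br b (br c (B a)))
     + (br (B c) (br a b) + br c (br (B a) b) + br c (br a (B b))) = 0" .
  have J2: "br a (br b c) + br b (br c a) + br c (br a b) = 0" by (rule jac)
  have "phi a (phi b c) + phi b (phi c a) + phi c (phi a b) =
     ((br (B a) (br (B b) c) + br (B a) (br b (B c)) + br a (br (B b) (B c)))
     + (br (B b) (br (B c) a) + br (B b) (br c (B a)) + br b (br (B c) (B a)))
     + (br (B c) (br (B a) b) + br (B c) (br a (B b)) + br c (br (B a) (B b))))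
   + sc lam ((br (B a) (br b c) + br a (br (B b) c) + br a (br b (B c)))
     + (br (B b) (br c a) + br b (br (B c) a) + br b (br c (B a)))
     + (br (B c) (br a b) + br c (br (B a) b) + br c (br a (B b))))
   + sc (lam * lam) (br a (br b c) + br b (br c a) + br c (br a b))"
    unfolding phi_expand by (simp add: V.scale_right_distrib ac_simps)
  also have "\<dots> = 0" using J0' J1' J2 by simp
  finally show ?thesis .
qed

lemma M_jac: "M a (M b c) + M b (M c a) + M c (M a b) = 0"
proof -
  have "M a (M b c) + M b (M c a) + M c (M a b)
      = sc (1/lam) (sc (1/lam) (phi a (phi b c) + phi b (phi c a) + phi c (phi a b)))"
    by (simp add: M_phi phi_sc2 V.scale_right_distrib)
  then show ?thesis by (simp add: phi_jac)
qed

lemma S_adj: "(\<lambda>z. S a (br x z)) = S (br a x)"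
proof
  fix z show "S a (br x z) = S (br a x) z"
    using SI[of a x z] br_anti[of x a] by (simp add: S_neg1)
qed

lemma K: "S (M a b) z = S (P (br a z)) b + S (P a) (br b z)"
proof -
  have 1: "S (br (P a) b) z = S (P a) (br b z)"
    using SI[of "P a" b z] br_anti[of b "P a"] by (simp add: S_neg1)
  have 2: "S (br (Qm b) a) z = - S (P (br a z)) b"
  proof -
    have "S (br (Qm b) a) z = - S a (br (Qm b) z)" using SI[of a "Qm b" z] by simp
    also have "\<dots> = S a (br z (Qm b))" using br_anti[of "Qm b" z] by (simp add: S_neg2)
    also have "\<dots> = - S (br z a) (Qm b)" by (rule SI)
    also have "\<dots> = S (P (br z a)) b" using S_PQ[of "br z a" b] by simp
    also have "\<dots> = - S (P (br a z)) b" using br_anti[of z a] by (simp add: P_neg S_neg1)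
    finally show ?thesis .
  qed
  show ?thesis by (simp add: M_def S_diff1 1 2)
qed

lemma JJ: "br (br a x) y - br (br a y) x = br a (br x y)"
proof -
  have j: "br a (br x y) = - (br x (br y a) + br y (br a x))"
    using jac[of a x y] by (metis add.assoc eq_neg_iff_add_eq_0)
  have h1: "br (br a x) y = - br y (br a x)" by (rule br_anti)
  have h2: "br (br a y) x = br x (br y a)"
    using br_anti[of "br a y" x] br_anti[of a y] by (simp add: br_neg2)
  show ?thesis by (simp add: j h1 h2 algebra_simps)
qed

lemma cocycle: "S (M a b) (br x y) =
   S (M (br a x) b) y + S (M a (br b x)) y - S (M (br a y) b) x - S (M a (br b y)) x"
proof -
  have e1: "S (P (br a (br x y))) b = S (P (br (br a x) y)) b - S (P (br (br a y) x)) b"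
    by (simp flip: JJ add: P_diff S_diff1)
  have e2: "S (P a) (br b (br x y)) = S (P a) (br (br b x) y) - S (P a) (br (br b y) x)"
    by (simp flip: JJ add: S_diff2)
  show ?thesis unfolding K e1 e2 by (simp add: algebra_simps)
qed

lemma E_br': "E (br x y) = br (E x) y"
  using br_anti[of x y] br_anti[of y "E x"] by (simp add: E_neg E_br)

lemma E_Q: "E (Qm b) = Qm (E b)" by (simp add: Qm_def E_sc EB)
lemma E_P: "E (P b) = P (E b)" by (simp add: P_def E_sc EB E_add)

lemma E_M2: "E (M a b) = M a (E b)"
  by (simp add: M_def E_diff E_br flip: E_Q E_br')
lemma E_M1: "E (M a b) = M (E a) b"
  by (simp add: M_def E_diff E_br flip: E_P E_br')

lemma S_comp_E: "S b \<circ> E = S (E b)"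
  by (auto simp: fun_eq_iff S_E S_sym[of b])

lemma lin_comb: "(\<lambda>v. c * S a v + d * S a' v) = S (sc c a + sc d a')"
  by (auto simp: fun_eq_iff S_add1 S_sc1)


lemma S_0 [simp]: "S 0 x = 0"
  using S_sc1[of 0 0 x] by simp

end

theorem theorem4p3:
  fixes sc :: "'k::field_char_0 \<Rightarrow> 'v::ab_group_add \<Rightarrow> 'v"
    and br :: "'v \<Rightarrow> 'v \<Rightarrow> 'v"
    and B E :: "'v \<Rightarrow> 'v"
    and S :: "'v \<Rightarrow> 'v \<Rightarrow> 'k"
    and lam :: 'k
  assumes "alg_closed_field TYPE('k)"
    and "fd_space sc"
    and "quadratic_ENL_RB sc br B S E lam"
  shows "enl_bialgebra sc br (r_bracket sc br B S lam) E
    \<and> (\<forall>\<xi>\<in>dual_sp sc. \<forall>\<eta>\<in>dual_sp sc.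
         r_bracket sc br B S lam \<xi> \<eta> \<circ> E = r_bracket sc br B S lam (\<xi> \<circ> E) \<eta>)"
proof -
  obtain Bs where fdv: "finite_dimensional_vector_space sc Bs"
    using assms(2) unfolding fd_space_def by blast
  interpret QE sc br B E S lam Bs
    by (rule QE.intro[OF fdv assms(3)])
  let ?R = "r_bracket sc br B S lam"
  have d1: "\<forall>\<xi>\<in>dual_sp sc. \<forall>\<eta>\<in>dual_sp sc. ?R \<xi> \<eta> \<in> dual_sp sc"
    by (auto elim!: dual_cases simp: rbr_S S_dual)
  have d2: "\<forall>a b \<xi> \<xi>' \<eta>. \<xi> \<in> dual_sp sc \<longrightarrow> \<xi>' \<in> dual_sp sc \<longrightarrow> \<eta> \<in> dual_sp sc \<longrightarrow>
        ?R (\<lambda>v. a * \<xi> v + b * \<xi>' v) \<eta> = (\<lambda>v. a * ?R \<xi> \<eta> v + b * ?R \<xi>' \<eta> v)"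
    by (auto elim!: dual_cases simp: rbr_S lin_comb M_add1 M_sc1)
  have d3: "\<forall>a b \<xi> \<eta> \<eta>'. \<xi> \<in> dual_sp sc \<longrightarrow> \<eta> \<in> dual_sp sc \<longrightarrow> \<eta>' \<in> dual_sp sc \<longrightarrow>
        ?R \<xi> (\<lambda>v. a * \<eta> v + b * \<eta>' v) = (\<lambda>v. a * ?R \<xi> \<eta> v + b * ?R \<xi> \<eta>' v)"
    by (auto elim!: dual_cases simp: rbr_S lin_comb M_add2 M_sc2)
  have d4: "\<forall>\<xi>\<in>dual_sp sc. \<forall>\<eta>\<in>dual_sp sc. ?R \<xi> \<eta> = (\<lambda>v. - ?R \<eta> \<xi> v)"
  proof (intro ballI)
    fix \<xi> \<eta> assume "\<xi> \<in> dual_sp sc" "\<eta> \<in> dual_sp sc"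
    then obtain a b where ab: "\<xi> = S a" "\<eta> = S b" by (metis dual_cases)
    show "?R \<xi> \<eta> = (\<lambda>v. - ?R \<eta> \<xi> v)"
      unfolding ab by (simp add: rbr_S fun_eq_iff M_anti[of a b] S_neg1)
  qed
  have d5: "\<forall>\<xi>\<in>dual_sp sc. \<forall>\<eta>\<in>dual_sp sc. \<forall>\<zeta>\<in>dual_sp sc.
        (\<lambda>v. ?R \<xi> (?R \<eta> \<zeta>) v + ?R \<eta> (?R \<zeta> \<xi>) v + ?R \<zeta> (?R \<xi> \<eta>) v) = (\<lambda>v. 0)"
  proof (intro ballI)
    fix \<xi> \<eta> \<zeta> assume "\<xi> \<in> dual_sp sc" "\<eta> \<in> dual_sp sc" "\<zeta> \<in> dual_sp sc"
    then obtain a b c where abc: "\<xi> = S a" "\<eta> = S b" "\<zeta> = S c" by (metis dual_cases)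
    have "S (M a (M b c)) v + S (M b (M c a)) v + S (M c (M a b)) v = 0" for v
    proof -
      have "S (M a (M b c)) v + S (M b (M c a)) v + S (M c (M a b)) v
          = S (M a (M b c) + M b (M c a) + M c (M a b)) v" by (simp add: S_add1)
      then show ?thesis by (simp add: M_jac)
    qed
    then show "(\<lambda>v. ?R \<xi> (?R \<eta> \<zeta>) v + ?R \<eta> (?R \<zeta> \<xi>) v + ?R \<zeta> (?R \<xi> \<eta>) v) = (\<lambda>v. 0)"
      by (simp add: abc rbr_S)
  qed
  have dla: "dual_lie_algebra sc ?R"
    unfolding dual_lie_algebra_def using d1 d2 d3 d4 d5 by blast
  have coc: "\<forall>x y. \<forall>\<xi>\<in>dual_sp sc. \<forall>\<eta>\<in>dual_sp sc.
        ?R \<xi> \<eta> (br x y) =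
          ?R (\<lambda>z. \<xi> (br x z)) \<eta> y + ?R \<xi> (\<lambda>z. \<eta> (br x z)) y
        - ?R (\<lambda>z. \<xi> (br y z)) \<eta> x - ?R \<xi> (\<lambda>z. \<eta> (br y z)) x"
    by (auto elim!: dual_cases simp: rbr_S S_adj cocycle)
  have lb: "lie_bialgebra sc br ?R"
    unfolding lie_bialgebra_def using lie dla coc by blast
  have e3: "\<forall>\<xi>\<in>dual_sp sc. \<forall>\<eta>\<in>dual_sp sc. ?R \<xi> \<eta> \<circ> E = ?R \<xi> (\<eta> \<circ> E)"
    by (auto elim!: dual_cases simp: rbr_S S_comp_E E_M2)
  have e4: "\<forall>\<xi>\<in>dual_sp sc. \<forall>\<eta>\<in>dual_sp sc. ?R \<xi> \<eta> \<circ> E = ?R (\<xi> \<circ> E) \<eta>"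
    by (auto elim!: dual_cases simp: rbr_S S_comp_E E_M1)
  have "enl_bialgebra sc br ?R E"
    unfolding enl_bialgebra_def using lb linE E_br e3 by blast
  then show ?thesis using e4 by blast
qed

end
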